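(* Every light confluent epimorphism between rooted trees is a composition of elementary light confluent epimorphisms.
   Context: A graph is a pair $(V,E)$ with $E\subseteq V^2$ reflexive and symmetric; a tree is a finite graph in which any two distinct vertices are joined by a unique sequence of pairwise distinct vertices with consecutive ones adjacent. A rooted tree is a tree with a distinguished root $r$; $x\le y$ iff the path from $r$ to $y$ contains $x$. Epimorphisms between rooted trees: vertex maps sending edges to edges, surjective on vertices and edges, root to root, order-preserving. Connected sets: not a union of two nonempty disjoint sets with no edges between; components are maximal connected subsets; for a vertex $v$, $G\setminus\{v\}$ denotes the induced subgraph on the remaining vertices. Confluent: for each connected $Q$ of the target, every component $K$ of $f^{-1}(Q)$ has $f(K)=Q$. Light: distinct vertices with the same image are never adjacent. An epimorphism $f\colon G\to H$ between rooted trees is elementary light confluent if there are a vertex $v\in G$ and two distinct components $C_1,C_2$ of $G\setminus\{v\}$ such that $f|_{C_1}$ and $f|_{C_2}$ are injective, $f(C_1)=f(C_2)$ is a component of $H\setminus\{f(v)\}$, and $f$ restricted to $G\setminus(C_1\cup C_2)$ is injective. *)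

theory Defs
  imports Main
begin

type_synonym 'a rtree = "'a set \<times> ('a \<times> 'a) set \<times> 'a"

definition verts :: "'a rtree \<Rightarrow> 'a set" where "verts T = fst T"
definition edges :: "'a rtree \<Rightarrow> ('a \<times> 'a) set" where "edges T = fst (snd T)"
definition root :: "'a rtree \<Rightarrow> 'a" where "root T = snd (snd T)"

definition is_graph :: "'a set \<Rightarrow> ('a \<times> 'a) set \<Rightarrow> bool" where
  "is_graph V E \<longleftrightarrow> E \<subseteq> V \<times> V \<and> (\<forall>x\<in>V. (x, x) \<in> E) \<and> (\<forall>x y. (x, y) \<in> E \<longrightarrow> (y, x) \<in> E)"

definition is_path :: "('a \<times> 'a) set \<Rightarrow> 'a list \<Rightarrow> 'a \<Rightarrow> 'a \<Rightarrow> bool" where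
  "is_path E p x y \<longleftrightarrow> p \<noteq> [] \<and> hd p = x \<and> last p = y \<and> distinct p \<and>
     (\<forall>i. Suc i < length p \<longrightarrow> (p ! i, p ! Suc i) \<in> E)"

definition is_tree :: "'a set \<Rightarrow> ('a \<times> 'a) set \<Rightarrow> bool" where
  "is_tree V E \<longleftrightarrow> finite V \<and> is_graph V E \<and>
     (\<forall>x\<in>V. \<forall>y\<in>V. x \<noteq> y \<longrightarrow> (\<exists>!p. is_path E p x y))"

definition rooted_tree :: "'a rtree \<Rightarrow> bool" where
  "rooted_tree T \<longleftrightarrow> is_tree (verts T) (edges T) \<and> root T \<in> verts T"

definition tree_le :: "'a rtree \<Rightarrow> 'a \<Rightarrow> 'a \<Rightarrow> bool" where
  "tree_le T x y \<longleftrightarrow> (\<exists>p. is_path (edges T) p (root T) y \<and> x \<in> set p)"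

definition epimorphism :: "('a \<Rightarrow> 'b) \<Rightarrow> 'a rtree \<Rightarrow> 'b rtree \<Rightarrow> bool" where
  "epimorphism f G H \<longleftrightarrow> rooted_tree G \<and> rooted_tree H \<and>
     f ` verts G = verts H \<and>
     (\<lambda>(a, b). (f a, f b)) ` edges G = edges H \<and>
     f (root G) = root H \<and>
     (\<forall>x\<in>verts G. \<forall>y\<in>verts G. tree_le G x y \<longrightarrow> tree_le H (f x) (f y))"

definition connected_set :: "('a \<times> 'a) set \<Rightarrow> 'a set \<Rightarrow> bool" where
  "connected_set E S \<longleftrightarrow> \<not> (\<exists>A B. A \<noteq> {} \<and> B \<noteq> {} \<and> A \<inter> B = {} \<and> A \<union> B = S \<and>
       (\<forall>a\<in>A. \<forall>b\<in>B. (a, b) \<notin> E))"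

definition component_of :: "('a \<times> 'a) set \<Rightarrow> 'a set \<Rightarrow> 'a set \<Rightarrow> bool" where
  "component_of E S K \<longleftrightarrow> K \<noteq> {} \<and> K \<subseteq> S \<and> connected_set E K \<and>
     (\<forall>L. K \<subseteq> L \<and> L \<subseteq> S \<and> connected_set E L \<longrightarrow> L = K)"

definition confluent :: "('a \<Rightarrow> 'b) \<Rightarrow> 'a rtree \<Rightarrow> 'b rtree \<Rightarrow> bool" where
  "confluent f G H \<longleftrightarrow> (\<forall>Q. Q \<subseteq> verts H \<and> connected_set (edges H) Q \<longrightarrow>
     (\<forall>K. component_of (edges G) (verts G \<inter> f -` Q) K \<longrightarrow> f ` K = Q))"

definition light :: "('a \<Rightarrow> 'b) \<Rightarrow> 'a rtree \<Rightarrow> bool" where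
  "light f G \<longleftrightarrow> (\<forall>x\<in>verts G. \<forall>y\<in>verts G. x \<noteq> y \<and> f x = f y \<longrightarrow> (x, y) \<notin> edges G)"

text \<open>Components of G minus v are the components of the vertex set V - {v}
  (the induced subgraph has exactly the edges of E between those vertices).\<close>
definition elementary_lc :: "('a \<Rightarrow> 'b) \<Rightarrow> 'a rtree \<Rightarrow> 'b rtree \<Rightarrow> bool" where
  "elementary_lc f G H \<longleftrightarrow> epimorphism f G H \<and>
     (\<exists>v\<in>verts G. \<exists>C1 C2.
        component_of (edges G) (verts G - {v}) C1 \<and>
        component_of (edges G) (verts G - {v}) C2 \<and> C1 \<noteq> C2 \<and>
        inj_on f C1 \<and> inj_on f C2 \<and> f ` C1 = f ` C2 \<and>
        component_of (edges H) (verts H - {f v}) (f ` C1) \<and>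
        inj_on f (verts G - (C1 \<union> C2)))"

text \<open>Composition of a list of maps [f1, ..., fn] as fn o ... o f1.\<close>
definition compose_list :: "('a \<Rightarrow> 'a) list \<Rightarrow> 'a \<Rightarrow> 'a" where
  "compose_list fs = foldl (\<lambda>acc g. g \<circ> acc) id fs"

end

theory Submission
  imports Defs
begin

section \<open>Generic connectivity\<close>

lemma connected_singleton: "connected_set E {x}"
  unfolding connected_set_def
proof (intro notI, elim exE conjE)
  fix A B assume H: "A \<noteq> {}" "B \<noteq> {}" "A \<inter> B = {}" "A \<union> B = {x}"
  then have "A \<subseteq> {x}" "B \<subseteq> {x}" by (metis Un_upper1, metis Un_upper2)
  then have "A = {x}" "B = {x}" using H(1,2) by (auto simp: subset_singleton_iff)
  then show False using H(3) by auto
qed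

lemma connected_pair: "(a,b) \<in> E \<Longrightarrow> (b,a) \<in> E \<Longrightarrow> connected_set E {a,b}"
  unfolding connected_set_def
proof (intro notI, elim exE conjE)
  fix A B assume H: "A \<noteq> {}" "B \<noteq> {}" "A \<inter> B = {}" "A \<union> B = {a,b}" "\<forall>x\<in>A. \<forall>y\<in>B. (x, y) \<notin> E"
    and e: "(a,b) \<in> E" "(b,a) \<in> E"
  from H(1) obtain u where u: "u \<in> A" by blast
  from H(2) obtain w where w: "w \<in> B" by blast
  have "u \<in> {a,b}" "w \<in> {a,b}" using u w H(4) by (metis UnI1, metis UnI2)
  moreover have "u \<noteq> w" using u w H(3) by blast
  ultimately have "(u = a \<and> w = b) \<or> (u = b \<and> w = a)" by blast
  then show False using H(5) u w e by blast
qed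

lemma not_connectedI:
  assumes "connected_set E L" "A \<noteq> {}" "B \<noteq> {}" "A \<inter> B = {}" "A \<union> B = L"
  shows "\<exists>a\<in>A. \<exists>b\<in>B. (a,b) \<in> E"
proof (rule ccontr)
  assume "\<not> ?thesis"
  then have "\<forall>a\<in>A. \<forall>b\<in>B. (a,b) \<notin> E" by blast
  then have "\<exists>A' B'. A' \<noteq> {} \<and> B' \<noteq> {} \<and> A' \<inter> B' = {} \<and> A' \<union> B' = L \<and> (\<forall>a\<in>A'. \<forall>b\<in>B'. (a,b) \<notin> E)"
    using assms(2-5) by (intro exI[of _ A] exI[of _ B]) simp
  then show False using assms(1) unfolding connected_set_def by simp
qed

lemma connectedI:
  assumes "\<And>A B. A \<noteq> {} \<Longrightarrow> B \<noteq> {} \<Longrightarrow> A \<inter> B = {} \<Longrightarrow> A \<union> B = L \<Longrightarrow> \<exists>a\<in>A. \<exists>b\<in>B. (a,b) \<in> E"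
  shows "connected_set E L"
  unfolding connected_set_def
proof (intro notI, elim exE conjE)
  fix A B assume "A \<noteq> {}" "B \<noteq> {}" "A \<inter> B = {}" "A \<union> B = L" "\<forall>a\<in>A. \<forall>b\<in>B. (a, b) \<notin> E"
  then show False using assms[of A B] by blast
qed

lemma component_crit:
  assumes "K \<noteq> {}" "K \<subseteq> S" "connected_set E K"
    "\<And>a b. a \<in> K \<Longrightarrow> b \<in> S - K \<Longrightarrow> (a,b) \<notin> E"
  shows "component_of E S K"
  unfolding component_of_def
proof (intro conjI allI impI assms(1-3))
  fix L assume L: "K \<subseteq> L \<and> L \<subseteq> S \<and> connected_set E L"
  show "L = K"
  proof (rule ccontr)
    assume "L \<noteq> K"
    then have ne: "L - K \<noteq> {}" using L by blast
    have "K \<inter> (L - K) = {}" "K \<union> (L - K) = L" using L by auto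
    with not_connectedI[of E L K "L - K"] ne L assms(1)
    obtain a b where "a \<in> K" "b \<in> L - K" "(a,b) \<in> E" by blast
    then show False using assms(4)[of a b] L by blast
  qed
qed

lemma connected_by_parent:
  fixes \<mu> :: "'a \<Rightarrow> nat"
  assumes "x \<in> S"
    "\<And>a. a \<in> S \<Longrightarrow> a \<noteq> x \<Longrightarrow> q a \<in> S \<and> (q a, a) \<in> E \<and> (a, q a) \<in> E \<and> \<mu> (q a) < \<mu> a"
  shows "connected_set E S"
proof (rule connectedI)
  fix A B assume AB: "A \<noteq> {}" "B \<noteq> {}" "A \<inter> B = {}" "A \<union> B = S"
  show "\<exists>a\<in>A. \<exists>b\<in>B. (a, b) \<in> E"
  proof (rule ccontr)
    assume nE: "\<not> ?thesis"
    have key: "Y = {}" if H: "X \<inter> Y = {}" "X \<union> Y = S"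
        "(\<forall>a\<in>X. \<forall>b\<in>Y. (a, b) \<notin> E) \<or> (\<forall>a\<in>Y. \<forall>b\<in>X. (a, b) \<notin> E)" "x \<in> X" for X Y
    proof -
      have "\<forall>a. \<mu> a = n \<longrightarrow> a \<in> S \<longrightarrow> a \<in> X" for n
      proof (induction n rule: less_induct)
        case (less n)
        show ?case
        proof (intro allI impI)
          fix a assume a: "\<mu> a = n" "a \<in> S"
          show "a \<in> X"
          proof (cases "a = x")
            case True then show ?thesis using H by simp
          next
            case False
            with assms(2)[OF a(2)] a have q: "q a \<in> S" "(q a, a) \<in> E" "(a, q a) \<in> E" "\<mu> (q a) < n" by auto
            with less have qX: "q a \<in> X" by blast
            have "a \<in> X \<union> Y" using H(2) a(2) by simp
            then show ?thesis using H(3) qX q(2,3) by blast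
          qed
        qed
      qed
      then have "\<forall>a\<in>S. a \<in> X" by blast
      then show "Y = {}" using H(1,2) by blast
    qed
    show False
    proof (cases "x \<in> A")
      case True
      then show False using key[of A B] AB nE by blast
    next
      case False
      then have "x \<in> B" using AB(4) assms(1) by blast
      then show False using key[of B A] AB nE by blast
    qed
  qed
qed

lemma connected_mono_edges:
  assumes "connected_set E K" "\<And>a b. a \<in> K \<Longrightarrow> b \<in> K \<Longrightarrow> (a,b) \<in> E \<Longrightarrow> (a,b) \<in> E'"
  shows "connected_set E' K"
proof (rule connectedI)
  fix A B assume AB: "A \<noteq> {}" "B \<noteq> {}" "A \<inter> B = {}" "A \<union> B = K"
  from not_connectedI[OF assms(1) AB] obtain a b where "a \<in> A" "b \<in> B" "(a,b) \<in> E" by blast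
  moreover have "a \<in> K" "b \<in> K" using AB(4) \<open>a \<in> A\<close> \<open>b \<in> B\<close> by blast+
  ultimately show "\<exists>a\<in>A. \<exists>b\<in>B. (a, b) \<in> E'" using assms(2) by blast
qed

lemma connected_image:
  assumes "connected_set E K" "\<And>a b. a \<in> K \<Longrightarrow> b \<in> K \<Longrightarrow> (a,b) \<in> E \<Longrightarrow> (h a, h b) \<in> E'"
  shows "connected_set E' (h ` K)"
proof (rule connectedI)
  fix A B assume AB: "A \<noteq> {}" "B \<noteq> {}" "A \<inter> B = {}" "A \<union> B = h ` K"
  let ?A = "K \<inter> h -` A" and ?B = "K \<inter> h -` B"
  have sub: "A \<subseteq> h ` K" "B \<subseteq> h ` K" using AB(4) by blast+
  have "?A \<noteq> {}" using AB(1) sub(1) by blast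
  moreover have "?B \<noteq> {}" using AB(2) sub(2) by blast
  moreover have "?A \<inter> ?B = {}" using AB(3) by blast
  moreover have "?A \<union> ?B = K"
  proof
    show "?A \<union> ?B \<subseteq> K" by blast
    show "K \<subseteq> ?A \<union> ?B"
    proof
      fix k assume "k \<in> K"
      then have "h k \<in> A \<union> B" using AB(4) by blast
      then show "k \<in> ?A \<union> ?B" using \<open>k \<in> K\<close> by blast
    qed
  qed
  ultimately have "\<exists>a\<in>?A. \<exists>b\<in>?B. (a,b) \<in> E"
    by (rule not_connectedI[OF assms(1)])
  then obtain a b where "a \<in> ?A" "b \<in> ?B" "(a,b) \<in> E" by blast
  then show "\<exists>a\<in>A. \<exists>b\<in>B. (a, b) \<in> E'" using assms(2)[of a b] by blast
qed

lemma exists_component: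
  assumes "finite S" "K \<subseteq> S" "K \<noteq> {}" "connected_set E K"
  shows "\<exists>K'. K \<subseteq> K' \<and> component_of E S K'"
proof -
  let ?F = "{L. K \<subseteq> L \<and> L \<subseteq> S \<and> connected_set E L}"
  have "?F \<subseteq> Pow S" by blast
  then have "finite ?F" using assms(1) finite_subset by blast
  moreover have "K \<in> ?F" using assms by blast
  then have "?F \<noteq> {}" by blast
  ultimately have "\<exists>m\<in>?F. \<forall>b\<in>?F. m \<le> b \<longrightarrow> m = b"
    by (rule finite_has_maximal)
  then obtain m where m: "m \<in> ?F" "\<forall>b\<in>?F. m \<le> b \<longrightarrow> m = b" by blast
  have "m \<noteq> {}" using m(1) assms(3) by blast
  moreover have "\<forall>L. m \<subseteq> L \<and> L \<subseteq> S \<and> connected_set E L \<longrightarrow> L = m"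
  proof (intro allI impI)
    fix L assume L: "m \<subseteq> L \<and> L \<subseteq> S \<and> connected_set E L"
    then have "L \<in> ?F" using m(1) by blast
    then show "L = m" using m(2) L by blast
  qed
  ultimately have "component_of E S m"
    unfolding component_of_def using m(1) by blast
  then show ?thesis using m by blast
qed

section \<open>Rooted trees\<close>

definition rp :: "'a rtree \<Rightarrow> 'a \<Rightarrow> 'a list" where
  "rp T x = (THE p. is_path (edges T) p (root T) x)"
definition par :: "'a rtree \<Rightarrow> 'a \<Rightarrow> 'a" where
  "par T x = last (butlast (rp T x))"
definition sub :: "'a rtree \<Rightarrow> 'a \<Rightarrow> 'a set" where
  "sub T x = {a \<in> verts T. x \<in> set (rp T a)}"

lemma path_self: assumes "is_path E' p x x" shows "p = [x]"
proof (cases p)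
  case Nil with assms show ?thesis by (simp add: is_path_def)
next
  case (Cons a q)
  with assms have "a = x" "last (a#q) = x" "a \<notin> set q" by (auto simp: is_path_def)
  then show ?thesis using Cons by (cases "q = []") auto
qed

lemma path_snoc:
  assumes "B \<noteq> []"
  shows "is_path E' (B @ [y]) a y \<longleftrightarrow> is_path E' B a (last B) \<and> y \<notin> set B \<and> (last B, y) \<in> E'"
proof -
  have adj: "(\<forall>i. Suc i < length (B @ [y]) \<longrightarrow> ((B @ [y]) ! i, (B @ [y]) ! Suc i) \<in> E') \<longleftrightarrow>
     (\<forall>i. Suc i < length B \<longrightarrow> (B ! i, B ! Suc i) \<in> E') \<and> (last B, y) \<in> E'"
  proof
    assume H: "\<forall>i. Suc i < length (B @ [y]) \<longrightarrow> ((B @ [y]) ! i, (B @ [y]) ! Suc i) \<in> E'"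
    have "(B ! i, B ! Suc i) \<in> E'" if "Suc i < length B" for i
      using H[rule_format, of i] that by (simp add: nth_append)
    moreover have "(last B, y) \<in> E'"
      using H[rule_format, of "length B - 1"] assms by (simp add: nth_append last_conv_nth)
    ultimately show "(\<forall>i. Suc i < length B \<longrightarrow> (B ! i, B ! Suc i) \<in> E') \<and> (last B, y) \<in> E'" by blast
  next
    assume H: "(\<forall>i. Suc i < length B \<longrightarrow> (B ! i, B ! Suc i) \<in> E') \<and> (last B, y) \<in> E'"
    show "\<forall>i. Suc i < length (B @ [y]) \<longrightarrow> ((B @ [y]) ! i, (B @ [y]) ! Suc i) \<in> E'"
    proof (intro allI impI)
      fix i assume i: "Suc i < length (B @ [y])"
      show "((B @ [y]) ! i, (B @ [y]) ! Suc i) \<in> E'"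
      proof (cases "Suc i < length B")
        case True then show ?thesis using H by (simp add: nth_append)
      next
        case False
        then have "i = length B - 1" using i by simp
        then show ?thesis using H assms by (simp add: nth_append last_conv_nth)
      qed
    qed
  qed
  show ?thesis unfolding is_path_def adj using assms by auto
qed

locale rtree =
  fixes T :: "'a rtree"
  assumes rt: "rooted_tree T"
begin

lemma finV: "finite (verts T)" and graph: "is_graph (verts T) (edges T)"
  and rootV: "root T \<in> verts T"
  and uniq: "\<And>x y. x \<in> verts T \<Longrightarrow> y \<in> verts T \<Longrightarrow> x \<noteq> y \<Longrightarrow> \<exists>!p. is_path (edges T) p x y"
  using rt unfolding rooted_tree_def is_tree_def by auto

lemma E_V: "(a,b) \<in> edges T \<Longrightarrow> a \<in> verts T \<and> b \<in> verts T"
  using graph unfolding is_graph_def by auto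
lemma E_refl: "a \<in> verts T \<Longrightarrow> (a,a) \<in> edges T"
  using graph unfolding is_graph_def by auto
lemma E_sym: "(a,b) \<in> edges T \<Longrightarrow> (b,a) \<in> edges T"
  using graph unfolding is_graph_def by auto

lemma path_in_V: assumes "is_path (edges T) p x y" "x \<in> verts T" shows "set p \<subseteq> verts T"
proof
  fix z assume "z \<in> set p"
  then obtain i where i: "i < length p" "p ! i = z" by (auto simp: in_set_conv_nth)
  show "z \<in> verts T"
  proof (cases i)
    case 0 with assms i show ?thesis by (auto simp: is_path_def hd_conv_nth)
  next
    case (Suc j) with assms i have "(p!j, p!i) \<in> edges T" by (auto simp: is_path_def)
    then show ?thesis using E_V i by auto
  qed
qed

lemma ex1_rp: assumes "x \<in> verts T" shows "\<exists>!p. is_path (edges T) p (root T) x"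
proof (cases "x = root T")
  case True
  show ?thesis
  proof (rule ex1I[of _ "[root T]"])
    show "is_path (edges T) [root T] (root T) x" using True by (simp add: is_path_def)
    fix p assume "is_path (edges T) p (root T) x"
    then show "p = [root T]" using path_self True by simp
  qed
next
  case False then show ?thesis using uniq[OF rootV assms] by simp
qed

lemma rp_path: "x \<in> verts T \<Longrightarrow> is_path (edges T) (rp T x) (root T) x"
  unfolding rp_def by (rule theI', rule ex1_rp)

lemma rp_unique: "x \<in> verts T \<Longrightarrow> is_path (edges T) p (root T) x \<Longrightarrow> rp T x = p"
  unfolding rp_def by (rule the1_equality[OF ex1_rp])

lemma rp_root: "rp T (root T) = [root T]"
  by (rule path_self[OF rp_path[OF rootV]])

lemma rp_basic:
  assumes "x \<in> verts T"
  shows "rp T x \<noteq> []" "hd (rp T x) = root T" "last (rp T x) = x" "distinct (rp T x)"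
    "set (rp T x) \<subseteq> verts T" "x \<in> set (rp T x)"
proof -
  have P: "is_path (edges T) (rp T x) (root T) x" using rp_path assms .
  then show ne: "rp T x \<noteq> []" and "hd (rp T x) = root T" and l: "last (rp T x) = x" and "distinct (rp T x)"
    by (auto simp: is_path_def)
  show "set (rp T x) \<subseteq> verts T" using path_in_V[OF P rootV] .
  show "x \<in> set (rp T x)" using last_in_set[OF ne] l by simp
qed

lemma rp_par:
  assumes "x \<in> verts T" "x \<noteq> root T"
  shows "par T x \<in> verts T" "rp T x = rp T (par T x) @ [x]" "(par T x, x) \<in> edges T"
    "(x, par T x) \<in> edges T" "par T x \<noteq> x" "x \<notin> set (rp T (par T x))"
proof -
  let ?P = "rp T x" let ?B = "butlast ?P"
  have P: "is_path (edges T) ?P (root T) x" using rp_path assms(1) .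
  have ne: "?P \<noteq> []" and l: "last ?P = x" and h: "hd ?P = root T" using P by (simp_all add: is_path_def)
  have eq: "?P = ?B @ [x]" using append_butlast_last_id[OF ne] l by simp
  have "?B \<noteq> []"
  proof
    assume "?B = []"
    then have "?P = [x]" using eq by simp
    then show False using h assms(2) by simp
  qed
  have "is_path (edges T) (?B @ [x]) (root T) x" using P eq by simp
  then have PB: "is_path (edges T) ?B (root T) (last ?B)" "x \<notin> set ?B" "(last ?B, x) \<in> edges T"
    using path_snoc[OF \<open>?B \<noteq> []\<close>] by auto
  have "last ?B \<in> set ?B" using last_in_set[OF \<open>?B \<noteq> []\<close>] .
  then have "last ?B \<in> verts T" using path_in_V[OF PB(1) rootV] by blast
  then show pV: "par T x \<in> verts T" unfolding par_def .
  have "rp T (par T x) = ?B" using rp_unique[OF pV] PB(1) unfolding par_def by simp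
  then show "rp T x = rp T (par T x) @ [x]" using eq by simp
  show "(par T x, x) \<in> edges T" using PB(3) unfolding par_def .
  then show "(x, par T x) \<in> edges T" by (rule E_sym)
  show "par T x \<noteq> x" using PB(2) \<open>last ?B \<in> set ?B\<close> unfolding par_def by auto
  show "x \<notin> set (rp T (par T x))" using \<open>rp T (par T x) = ?B\<close> PB(2) by simp
qed

lemma rp_len_root: "x \<in> verts T \<Longrightarrow> x \<noteq> root T \<Longrightarrow> length (rp T x) \<ge> 2"
  using rp_par[of x] rp_basic(1)[of "par T x"] by (cases "rp T (par T x)") auto

lemma rp_par_less: "x \<in> verts T \<Longrightarrow> x \<noteq> root T \<Longrightarrow> length (rp T (par T x)) < length (rp T x)"
  using rp_par[of x] by simp

lemma par_in_rp: "x \<in> verts T \<Longrightarrow> x \<noteq> root T \<Longrightarrow> par T x \<in> set (rp T x)"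
  using rp_par[of x] rp_basic(6)[of "par T x"] by simp

lemma rp_prefix: "x \<in> verts T \<Longrightarrow> y \<in> set (rp T x) \<Longrightarrow> \<exists>s. rp T x = rp T y @ s"
proof (induction x rule: measure_induct_rule[where f="\<lambda>x. length (rp T x)"])
  case (less x)
  show ?case
  proof (cases "y = x")
    case True then show ?thesis by auto
  next
    case False
    have "x \<noteq> root T" using less.prems False rp_root by auto
    then have *: "par T x \<in> verts T" "rp T x = rp T (par T x) @ [x]" using rp_par less.prems by auto
    then have "y \<in> set (rp T (par T x))" using less.prems False by auto
    from less.IH[OF _ *(1) this] * show ?thesis by auto
  qed
qed

lemma rp_anc_V: "x \<in> verts T \<Longrightarrow> y \<in> set (rp T x) \<Longrightarrow> y \<in> verts T"
  using rp_basic(5) by blast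

lemma rp_same_len:
  assumes "x \<in> verts T" "y \<in> set (rp T x)" "z \<in> set (rp T x)" "length (rp T y) = length (rp T z)"
  shows "y = z"
proof -
  obtain s t where "rp T x = rp T y @ s" "rp T x = rp T z @ t" using rp_prefix assms by metis
  then have "rp T y = rp T z" using assms(4) by (metis append_eq_append_conv)
  then show ?thesis using rp_basic(3) rp_anc_V assms by metis
qed

lemma rp_linear:
  assumes "x \<in> verts T" "y \<in> set (rp T x)" "z \<in> set (rp T x)"
  shows "y \<in> set (rp T z) \<or> z \<in> set (rp T y)"
proof -
  obtain s t where st: "rp T y @ s = rp T z @ t" using rp_prefix assms by metis
  have yV: "y \<in> verts T" and zV: "z \<in> verts T" using rp_anc_V assms by auto
  from st obtain us where "(rp T y = rp T z @ us \<and> us @ s = t) \<or> (rp T y @ us = rp T z \<and> s = us @ t)"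
    by (auto simp: append_eq_append_conv2)
  then show ?thesis
  proof (elim disjE conjE)
    assume "rp T y = rp T z @ us"
    then have "set (rp T z) \<subseteq> set (rp T y)" by simp
    then show ?thesis using rp_basic(6)[OF zV] by blast
  next
    assume "rp T y @ us = rp T z"
    then have "set (rp T y) \<subseteq> set (rp T z)" by (metis set_append Un_upper1)
    then show ?thesis using rp_basic(6)[OF yV] by blast
  qed
qed

lemma rp_trans: "x \<in> verts T \<Longrightarrow> z \<in> set (rp T x) \<Longrightarrow> y \<in> set (rp T z) \<Longrightarrow> y \<in> set (rp T x)"
  using rp_prefix by fastforce

lemma rp_antisym:
  assumes "y \<in> verts T" "z \<in> verts T" "y \<in> set (rp T z)" "z \<in> set (rp T y)"
  shows "y = z"
proof -
  obtain s t where "rp T z = rp T y @ s" "rp T y = rp T z @ t" using rp_prefix assms by metis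
  then have "length (rp T z) = length (rp T y) + length s" "length (rp T y) = length (rp T z) + length t"
    by simp_all
  then have "s = []" by simp
  then have "rp T y = rp T z" using \<open>rp T z = rp T y @ s\<close> by simp
  then show ?thesis using rp_basic(3) assms by metis
qed

lemma rp_strict: 
  assumes "x \<in> verts T" "y \<in> set (rp T x)" "y \<noteq> x"
  shows "length (rp T y) < length (rp T x)"
proof -
  obtain s where s: "rp T x = rp T y @ s" using rp_prefix assms by metis
  have "s \<noteq> []"
  proof
    assume "s = []"
    then have "rp T x = rp T y" using s by simp
    then have "last (rp T x) = last (rp T y)" by simp
    then show False using rp_basic(3) assms rp_anc_V[OF assms(1,2)] by simp
  qed
  then show ?thesis using s by simp
qed

lemma tree_le_iff: assumes "x \<in> verts T" shows "tree_le T y x \<longleftrightarrow> y \<in> set (rp T x)"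
proof
  assume "tree_le T y x"
  then obtain p where "is_path (edges T) p (root T) x" "y \<in> set p" unfolding tree_le_def by blast
  then show "y \<in> set (rp T x)" using rp_unique[OF assms] by simp
next
  assume "y \<in> set (rp T x)"
  then show "tree_le T y x" unfolding tree_le_def using rp_path[OF assms] by blast
qed

lemma edge_not_anc:
  assumes "(a,b) \<in> edges T" "b \<notin> set (rp T a)"
  shows "b \<noteq> root T \<and> par T b = a"
proof -
  have aV: "a \<in> verts T" and bV: "b \<in> verts T" using E_V assms(1) by auto
  have "is_path (edges T) (rp T a @ [b]) (root T) b"
    using path_snoc[OF rp_basic(1)[OF aV]] rp_path[OF aV] rp_basic(3)[OF aV] assms by simp
  then have eq: "rp T b = rp T a @ [b]" using rp_unique bV by blast
  have bnr: "b \<noteq> root T"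
  proof
    assume "b = root T"
    then have "length (rp T b) = 1" using rp_root by simp
    then show False using eq rp_basic(1)[OF aV] by (cases "rp T a") auto
  qed
  moreover have "rp T (par T b) = rp T a" using rp_par(2)[OF bV bnr] eq by simp
  then have "par T b = a" using rp_basic(3) aV rp_par(1)[OF bV \<open>b \<noteq> root T\<close>] by metis
  ultimately show ?thesis by simp
qed

lemma edge_cases:
  assumes "(a,b) \<in> edges T" "a \<noteq> b"
  shows "(b \<noteq> root T \<and> par T b = a) \<or> (a \<noteq> root T \<and> par T a = b)"
proof (cases "b \<in> set (rp T a)")
  case False then show ?thesis using edge_not_anc assms by blast
next
  case True
  have aV: "a \<in> verts T" and bV: "b \<in> verts T" using E_V assms(1) by auto
  have "a \<notin> set (rp T b)" using rp_antisym[OF aV bV] True assms(2) by blast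
  then show ?thesis using edge_not_anc[OF E_sym[OF assms(1)]] by blast
qed

lemma sub_step:
  assumes "a \<in> verts T" "a \<noteq> root T"
  shows "a \<in> sub T x \<longleftrightarrow> a = x \<or> par T a \<in> sub T x"
  using rp_par[OF assms] assms unfolding sub_def by auto

lemma sub_self: "x \<in> verts T \<Longrightarrow> x \<in> sub T x"
  unfolding sub_def using rp_basic(6) by blast

lemma sub_V: "sub T x \<subseteq> verts T"
  unfolding sub_def by blast

lemma root_sub: "root T \<in> sub T x \<Longrightarrow> x = root T"
  unfolding sub_def using rp_root by auto

lemma sub_component:
  assumes "c \<in> verts T" "c \<noteq> root T"
  shows "component_of (edges T) (verts T - {par T c}) (sub T c)"
proof (rule component_crit)
  show "sub T c \<noteq> {}" using sub_self assms by blast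
  have "par T c \<notin> sub T c" using rp_par(6)[OF assms] unfolding sub_def by blast
  then show "sub T c \<subseteq> verts T - {par T c}" using sub_V by blast
  show "connected_set (edges T) (sub T c)"
  proof (rule connected_by_parent[where x=c and q="par T" and \<mu>="\<lambda>x. length (rp T x)"])
    show "c \<in> sub T c" using sub_self assms by blast
    fix a assume a: "a \<in> sub T c" "a \<noteq> c"
    then have aV: "a \<in> verts T" using sub_V by blast
    have "a \<noteq> root T" using a root_sub by blast
    then show "par T a \<in> sub T c \<and> (par T a, a) \<in> edges T \<and> (a, par T a) \<in> edges T \<and>
      length (rp T (par T a)) < length (rp T a)"
      using sub_step[OF aV] a rp_par[OF aV] rp_par_less[OF aV] by auto
  qed
  fix a b assume a: "a \<in> sub T c" and b: "b \<in> verts T - {par T c} - sub T c"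
  show "(a, b) \<notin> edges T"
  proof
    assume ab: "(a, b) \<in> edges T"
    have "a \<noteq> b" using a b by blast
    from edge_cases[OF ab this] show False
    proof
      assume "b \<noteq> root T \<and> par T b = a"
      then show False using sub_step[of b c] a b by auto
    next
      assume H: "a \<noteq> root T \<and> par T a = b"
      then have "a = c" using sub_step[of a c] a b sub_V by auto
      then show False using H b by auto
    qed
  qed
qed

end

locale lepi = G: rtree G + H: rtree H
  for G :: "'a rtree" and H :: "'b rtree" +
  fixes f :: "'a \<Rightarrow> 'b"
  assumes epi: "epimorphism f G H" and lt: "light f G"
begin

lemma fV: "x \<in> verts G \<Longrightarrow> f x \<in> verts H"
  using epi unfolding epimorphism_def by blast

lemma fimg: "f ` verts G = verts H"
  using epi unfolding epimorphism_def by blast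

lemma fE: assumes "(a,b) \<in> edges G" shows "(f a, f b) \<in> edges H"
proof -
  have "(\<lambda>(a,b). (f a, f b)) (a,b) \<in> (\<lambda>(a,b). (f a, f b)) ` edges G" using assms by (rule imageI)
  then show ?thesis using epi unfolding epimorphism_def by simp
qed

lemma froot: "f (root G) = root H"
  using epi unfolding epimorphism_def by blast

lemma fle: assumes "x \<in> verts G" "y \<in> set (rp G x)" shows "f y \<in> set (rp H (f x))"
proof -
  have yV: "y \<in> verts G" using G.rp_anc_V assms by blast
  have "tree_le G y x" using G.tree_le_iff assms by blast
  then have "tree_le H (f y) (f x)" using epi assms(1) yV unfolding epimorphism_def by blast
  then show ?thesis using H.tree_le_iff fV[OF assms(1)] by blast
qed

lemma flight: "x \<in> verts G \<Longrightarrow> y \<in> verts G \<Longrightarrow> x \<noteq> y \<Longrightarrow> (x,y) \<in> edges G \<Longrightarrow> f x \<noteq> f y"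
  using lt unfolding light_def by blast

lemma f_par:
  assumes x: "x \<in> verts G" "x \<noteq> root G"
  shows "f x \<noteq> root H" "f (par G x) = par H (f x)"
proof -
  let ?a = "par G x"
  have aV: "?a \<in> verts G" and e: "(x, ?a) \<in> edges G" and ne: "?a \<noteq> x" using G.rp_par[OF x] by auto
  have fne: "f x \<noteq> f ?a" using flight[OF x(1) aV] ne e by metis
  have fa_in: "f ?a \<in> set (rp H (f x))" using fle[OF x(1) G.par_in_rp[OF x]] .
  have fe: "(f x, f ?a) \<in> edges H" using fE[OF e] .
  from H.edge_cases[OF fe fne]
  have "f x \<noteq> root H \<and> par H (f x) = f ?a"
  proof (elim disjE)
    assume H1: "f ?a \<noteq> root H \<and> par H (f ?a) = f x"
    then have "f x \<in> set (rp H (f ?a))" using H.par_in_rp[of "f ?a"] fV[OF aV] by auto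
    then have "f x = f ?a" using H.rp_antisym[OF fV[OF x(1)] fV[OF aV]] fa_in by simp
    then show ?thesis using fne by simp
  qed simp
  then show "f x \<noteq> root H" "f (par G x) = par H (f x)" by simp_all
qed

lemma f_len: "x \<in> verts G \<Longrightarrow> length (rp H (f x)) = length (rp G x)"
proof (induction x rule: measure_induct_rule[where f="\<lambda>x. length (rp G x)"])
  case (less x)
  show ?case
  proof (cases "x = root G")
    case True then show ?thesis using froot G.rp_root H.rp_root by simp
  next
    case False
    have "length (rp H (f (par G x))) = length (rp G (par G x))"
      using less.IH G.rp_par_less[OF less.prems False] G.rp_par(1)[OF less.prems False] by blast
    then show ?thesis
      using G.rp_par(2)[OF less.prems False] H.rp_par(2)[OF fV[OF less.prems] f_par(1)[OF less.prems False]]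
        f_par(2)[OF less.prems False] by simp
  qed
qed

lemma f_sub_subset: assumes "x \<in> verts G" shows "f ` sub G x \<subseteq> sub H (f x)"
proof
  fix b assume "b \<in> f ` sub G x"
  then obtain a where a: "a \<in> sub G x" "b = f a" by blast
  then have aV: "a \<in> verts G" and "x \<in> set (rp G a)" unfolding sub_def by auto
  then have "f x \<in> set (rp H (f a))" using fle by blast
  then show "b \<in> sub H (f x)" using a fV[OF aV] unfolding sub_def by simp
qed

definition sc :: "'a \<Rightarrow> 'a \<Rightarrow> bool" where
  "sc a b \<longleftrightarrow> a \<in> verts G \<and> b \<in> verts G \<and> a \<noteq> b \<and> a \<noteq> root G \<and> b \<noteq> root G \<and>
     par G a = par G b \<and> f a = f b"

lemma sc_sym: "sc a b \<Longrightarrow> sc b a"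
  unfolding sc_def by auto

lemma sc_len: assumes "sc a b" shows "length (rp G a) = length (rp G b)"
proof -
  have "rp G a = rp G (par G a) @ [a]" "rp G b = rp G (par G b) @ [b]"
    using G.rp_par(2) assms unfolding sc_def by auto
  then show ?thesis using assms unfolding sc_def by simp
qed

lemma collision_sc:
  "a \<in> verts G \<Longrightarrow> b \<in> verts G \<Longrightarrow> a \<noteq> b \<Longrightarrow> f a = f b \<Longrightarrow>
   \<exists>a' b'. sc a' b' \<and> a' \<in> set (rp G a) \<and> b' \<in> set (rp G b) \<and> length (rp G a') = length (rp G b')"
proof (induction a arbitrary: b rule: measure_induct_rule[where f="\<lambda>x. length (rp G x)"])
  case (less a)
  have len: "length (rp G a) = length (rp G b)" using f_len less.prems by metis
  have anr: "a \<noteq> root G"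
  proof
    assume ar: "a = root G"
    then have "length (rp G b) = 1" using len G.rp_root by simp
    then have "b = root G" using G.rp_len_root[OF less.prems(2)] by fastforce
    then show False using ar less.prems by simp
  qed
  have bnr: "b \<noteq> root G"
  proof
    assume br: "b = root G"
    then have "length (rp G a) = 1" using len G.rp_root by simp
    then have "a = root G" using G.rp_len_root[OF less.prems(1)] by fastforce
    then show False using br less.prems by simp
  qed
  show ?case
  proof (cases "par G a = par G b")
    case True
    then have "sc a b" unfolding sc_def using less.prems anr bnr by simp
    then show ?thesis using G.rp_basic(6) less.prems len by blast
  next
    case False
    have eq: "f (par G a) = f (par G b)" using f_par(2) anr bnr less.prems by metis
    obtain a' b' where ab: "sc a' b'" "a' \<in> set (rp G (par G a))" "b' \<in> set (rp G (par G b))"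
      "length (rp G a') = length (rp G b')"
      using less.IH[OF G.rp_par_less[OF less.prems(1) anr] G.rp_par(1)[OF less.prems(1) anr]
          G.rp_par(1)[OF less.prems(2) bnr] False eq] by blast
    have "a' \<in> set (rp G a)" using G.rp_trans[OF less.prems(1) G.par_in_rp[OF less.prems(1) anr] ab(2)] .
    moreover have "b' \<in> set (rp G b)" using G.rp_trans[OF less.prems(2) G.par_in_rp[OF less.prems(2) bnr] ab(3)] .
    ultimately show ?thesis using ab by blast
  qed
qed

lemma inj_below_max:
  assumes x1: "sc x1 x2" and mx: "\<forall>a b. sc a b \<longrightarrow> length (rp G a) \<le> length (rp G x1)"
  shows "inj_on f (sub G x1)"
proof (rule inj_onI)
  fix a b assume a: "a \<in> sub G x1" and b: "b \<in> sub G x1" and fab: "f a = f b"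
  have aV: "a \<in> verts G" and bV: "b \<in> verts G" using a b G.sub_V by auto
  have x1a: "x1 \<in> set (rp G a)" and x1b: "x1 \<in> set (rp G b)" using a b unfolding sub_def by auto
  have x1V: "x1 \<in> verts G" using x1 unfolding sc_def by simp
  show "a = b"
  proof (rule ccontr)
    assume "a \<noteq> b"
    then obtain a' b' where ab: "sc a' b'" "a' \<in> set (rp G a)" "b' \<in> set (rp G b)"
      "length (rp G a') = length (rp G b')"
      using collision_sc[OF aV bV _ fab] by blast
    have le: "length (rp G a') \<le> length (rp G x1)" using mx ab(1) by blast
    have anc: "z \<in> set (rp G x1)" if z: "z \<in> set (rp G c)" "x1 \<in> set (rp G c)" "c \<in> verts G"
      "length (rp G z) \<le> length (rp G x1)" for z c
    proof -
      from G.rp_linear[OF z(3) z(1) z(2)] show ?thesis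
      proof
        assume "x1 \<in> set (rp G z)"
        have zV: "z \<in> verts G" using G.rp_anc_V z by blast
        show ?thesis
        proof (cases "x1 = z")
          case True then show ?thesis using G.rp_basic(6)[OF x1V] by simp
        next
          case False
          then have "length (rp G x1) < length (rp G z)" using G.rp_strict[OF zV \<open>x1 \<in> set (rp G z)\<close>] by simp
          then show ?thesis using z(4) by simp
        qed
      qed
    qed
    have "a' \<in> set (rp G x1)" using anc[OF ab(2) x1a aV le] .
    moreover have "b' \<in> set (rp G x1)" using anc[OF ab(3) x1b bV] le ab(4) by simp
    ultimately have "a' = b'" using G.rp_same_len[OF x1V _ _ ab(4)] by simp
    then show False using ab(1) unfolding sc_def by simp
  qed
qed

lemma exists_fold:
  assumes "\<not> inj_on f (verts G)"
  shows "\<exists>x1 x2. sc x1 x2 \<and> inj_on f (sub G x1) \<and> inj_on f (sub G x2)"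
proof -
  obtain a b where ab: "a \<in> verts G" "b \<in> verts G" "a \<noteq> b" "f a = f b"
    using assms unfolding inj_on_def by blast
  then obtain a' b' where "sc a' b'" using collision_sc by blast
  let ?SC = "{p. sc (fst p) (snd p)}"
  let ?g = "\<lambda>p. length (rp G (fst p))"
  have "?SC \<subseteq> verts G \<times> verts G" unfolding sc_def by auto
  then have fin: "finite ?SC" using finite_subset G.finV by blast
  have ne: "?SC \<noteq> {}" using \<open>sc a' b'\<close> by auto
  let ?m = "Max (?g ` ?SC)"
  have "?m \<in> ?g ` ?SC" using fin ne by (intro Max_in) auto
  then obtain p where p0: "p \<in> ?SC" "?m = ?g p" by (rule imageE)
  then have p: "sc (fst p) (snd p)" "?g p = ?m" by simp_all
  have mx: "\<forall>a b. sc a b \<longrightarrow> length (rp G a) \<le> ?m"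
  proof (intro allI impI)
    fix a b assume "sc a b"
    then have "(a,b) \<in> ?SC" by simp
    then have "?g (a,b) \<le> ?m" by (rule Max_ge[OF finite_imageI[OF fin] imageI])
    then show "length (rp G a) \<le> ?m" by simp
  qed
  have i1: "inj_on f (sub G (fst p))" using inj_below_max[OF p(1)] mx p(2) by simp
  have "length (rp G (snd p)) = ?m" using sc_len[OF p(1)] p(2) by simp
  then have i2: "inj_on f (sub G (snd p))" using inj_below_max[OF sc_sym[OF p(1)]] mx by simp
  show ?thesis using p(1) i1 i2 by blast
qed

end

locale lce = lepi +
  assumes confl: "confluent f G H"
begin

lemma child_lift:
  assumes x: "x \<in> verts G" and c: "c' \<in> verts H" "c' \<noteq> root H" "par H c' = f x"
  shows "\<exists>c \<in> verts G. c \<noteq> root G \<and> par G c = x \<and> f c = c'"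
proof -
  let ?Q = "{f x, c'}"
  have e1: "(f x, c') \<in> edges H" "(c', f x) \<in> edges H" using H.rp_par[OF c(1,2)] c(3) by auto
  have Qc: "connected_set (edges H) ?Q" using connected_pair[OF e1] .
  have QV: "?Q \<subseteq> verts H" using fV[OF x] c(1) by blast
  let ?S = "verts G \<inter> f -` ?Q"
  have finS: "finite ?S" using G.finV by simp
  have xS: "{x} \<subseteq> ?S" using x by blast
  obtain K where K: "{x} \<subseteq> K" "component_of (edges G) ?S K"
    using exists_component[OF finS xS _ connected_singleton] by blast
  have fK: "f ` K = ?Q" using confl QV Qc K(2) unfolding confluent_def by blast
  have KS: "K \<subseteq> ?S" and Kc: "connected_set (edges G) K" using K(2) unfolding component_of_def by auto
  have cne: "c' \<noteq> f x" using H.rp_par(5)[OF c(1,2)] c(3) by simp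
  obtain y where y: "y \<in> K" "f y = c'" using fK by (metis imageE insertI1 insert_commute)
  have "y \<noteq> x" using y cne by auto
  then have "K - {x} \<noteq> {}" using y by blast
  moreover have "{x} \<inter> (K - {x}) = {}" "{x} \<union> (K - {x}) = K" using K(1) by auto
  ultimately have "\<exists>a\<in>{x}. \<exists>b\<in>K - {x}. (a, b) \<in> edges G"
    using not_connectedI[OF Kc, of "{x}" "K - {x}"] by blast
  then obtain b where b: "b \<in> K" "b \<noteq> x" "(x, b) \<in> edges G" by blast
  have bV: "b \<in> verts G" and fb: "f b \<in> ?Q" using KS b(1) by auto
  have "f b \<noteq> f x" using flight[OF x bV] b by metis
  then have fbc: "f b = c'" using fb by blast
  from G.edge_cases[OF b(3)] b(2)
  have "(b \<noteq> root G \<and> par G b = x) \<or> (x \<noteq> root G \<and> par G x = b)" by metis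
  then show ?thesis
  proof
    assume "b \<noteq> root G \<and> par G b = x"
    then show ?thesis using bV fbc by blast
  next
    assume H1: "x \<noteq> root G \<and> par G x = b"
    then have "par H (f x) = c'" using f_par[OF x] fbc by metis
    have fxr: "f x \<noteq> root H" using f_par(1)[OF x] H1 by simp
    have "c' \<in> set (rp H (f x))" using H.par_in_rp[OF fV[OF x] fxr] \<open>par H (f x) = c'\<close> by simp
    moreover have "f x \<in> set (rp H c')" using H.par_in_rp[OF c(1,2)] c(3) by simp
    ultimately have "c' = f x" using H.rp_antisym[OF c(1) fV[OF x]] by simp
    then show ?thesis using cne by simp
  qed
qed

lemma f_sub_eq: assumes x: "x \<in> verts G" shows "f ` sub G x = sub H (f x)"
proof
  show "f ` sub G x \<subseteq> sub H (f x)" using f_sub_subset[OF x] .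
  have "b \<in> sub H (f x) \<longrightarrow> b \<in> f ` sub G x" for b
  proof (induction b rule: measure_induct_rule[where f="\<lambda>b. length (rp H b)"])
    case (less b)
    show ?case
    proof
      assume b: "b \<in> sub H (f x)"
      have bV: "b \<in> verts H" using b H.sub_V by blast
      show "b \<in> f ` sub G x"
      proof (cases "b = f x")
        case True then show ?thesis using G.sub_self[OF x] by blast
      next
        case False
        have bnr: "b \<noteq> root H"
        proof
          assume br: "b = root H"
          then have "f x = root H" using H.root_sub b by blast
          then show False using False br by simp
        qed
        have "par H b \<in> sub H (f x)" using H.sub_step[OF bV bnr] b False by blast
        then have "par H b \<in> f ` sub G x" using less.IH H.rp_par_less[OF bV bnr] by blast
        then obtain a where a0: "a \<in> sub G x" "par H b = f a" by (rule imageE)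
        then have a: "a \<in> sub G x" "f a = par H b" by simp_all
        have aV: "a \<in> verts G" using a G.sub_V by blast
        obtain c where c: "c \<in> verts G" "c \<noteq> root G" "par G c = a" "f c = b"
          using child_lift[OF aV bV bnr] a(2) by metis
        have "c \<in> sub G x" using G.sub_step[OF c(1,2)] c(3) a(1) by blast
        then show ?thesis using c(4) by blast
      qed
    qed
  qed
  then show "sub H (f x) \<subseteq> f ` sub G x" by blast
qed

end

context rtree begin

lemma sub_no_edge:
  assumes "c \<in> verts T" "c \<noteq> root T" "a \<in> sub T c" "b \<in> verts T" "b \<noteq> par T c" "b \<notin> sub T c"
  shows "(a, b) \<notin> edges T"
proof
  assume ab: "(a, b) \<in> edges T"
  have "a \<noteq> b" using assms by blast
  from edge_cases[OF ab this] show False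
  proof
    assume "b \<noteq> root T \<and> par T b = a"
    then show False using sub_step[of b c] assms by auto
  next
    assume H: "a \<noteq> root T \<and> par T a = b"
    then have "a = c" using sub_step[of a c] assms sub_V by auto
    then show False using H assms by auto
  qed
qed

lemma path_mono: "is_path E1 p x y \<Longrightarrow> E1 \<subseteq> E2 \<Longrightarrow> is_path E2 p x y"
  unfolding is_path_def by blast

end

lemma path_restrict:
  assumes "is_path E p x y" "set p \<subseteq> W"
  shows "is_path (E \<inter> (W \<times> W)) p x y"
proof -
  have "(p ! i, p ! Suc i) \<in> E \<inter> (W \<times> W)" if "Suc i < length p" for i
  proof -
    have "(p ! i, p ! Suc i) \<in> E" using assms(1) that unfolding is_path_def by blast
    moreover have "p ! i \<in> W" "p ! Suc i \<in> W" using nth_mem[of i p] nth_mem[of "Suc i" p] that assms(2) by auto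
    ultimately show ?thesis by blast
  qed
  then show ?thesis using assms(1) unfolding is_path_def by blast
qed

locale fold = lce +
  fixes x1 x2
  assumes sc12: "sc x1 x2" and inj1: "inj_on f (sub G x1)" and inj2: "inj_on f (sub G x2)"
begin

definition "v = par G x1"
definition "W = verts G - sub G x2"
definition "T = (W, edges G \<inter> (W \<times> W), root G)"
definition "psi = inv_into (sub G x1) f"
definition "h z = (if z \<in> sub G x2 then psi (f z) else z)"

lemma T_simps: "verts T = W" "edges T = edges G \<inter> (W \<times> W)" "root T = root G"
  unfolding T_def verts_def edges_def root_def by simp_all

lemma basics:
  "x1 \<in> verts G" "x2 \<in> verts G" "x1 \<noteq> x2" "x1 \<noteq> root G" "x2 \<noteq> root G"
  "par G x2 = v" "par G x1 = v" "f x1 = f x2"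
  using sc12 unfolding sc_def v_def by auto

lemma vV: "v \<in> verts G" using G.rp_par(1)[OF basics(1,4)] basics(7) by simp

lemma rp_x: "rp G x1 = rp G v @ [x1]" "rp G x2 = rp G v @ [x2]"
  using G.rp_par(2)[OF basics(1,4)] G.rp_par(2)[OF basics(2,5)] basics by simp_all

lemma disj: "sub G x1 \<inter> sub G x2 = {}"
proof -
  have "False" if "a \<in> sub G x1" "a \<in> sub G x2" for a
  proof -
    have aV: "a \<in> verts G" using that G.sub_V by blast
    have "x1 \<in> set (rp G a)" "x2 \<in> set (rp G a)" using that unfolding sub_def by auto
    moreover have "length (rp G x1) = length (rp G x2)" using rp_x by simp
    ultimately have "x1 = x2" using G.rp_same_len[OF aV] by blast
    then show False using basics by simp
  qed
  then show ?thesis by blast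
qed

lemma C1W: "sub G x1 \<subseteq> W" using disj G.sub_V unfolding W_def by blast
lemma WV: "W \<subseteq> verts G" unfolding W_def by blast
lemma x1C1: "x1 \<in> sub G x1" using G.sub_self basics by blast
lemma x2C2: "x2 \<in> sub G x2" using G.sub_self basics by blast
lemma rootW: "root G \<in> W" using G.root_sub basics G.rootV unfolding W_def by blast
lemma vW: "v \<in> W"
proof -
  have "x2 \<notin> set (rp G v)" using G.rp_par(6)[OF basics(2,5)] basics by simp
  then show ?thesis using vV unfolding W_def sub_def by blast
qed

lemma fC: "f ` sub G x1 = f ` sub G x2"
  using f_sub_eq basics by metis

lemma psi_C2: "z \<in> sub G x2 \<Longrightarrow> psi (f z) \<in> sub G x1 \<and> f (psi (f z)) = f z"
proof -
  assume "z \<in> sub G x2"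
  then have "f z \<in> f ` sub G x1" using fC by blast
  then show ?thesis unfolding psi_def by (simp add: inv_into_into f_inv_into_f)
qed

lemma psi_C1: "c \<in> sub G x1 \<Longrightarrow> psi (f c) = c"
  unfolding psi_def using inj1 by (simp add: inv_into_f_f)

lemma h_W: "z \<in> W \<Longrightarrow> h z = z"
  unfolding h_def W_def by simp

lemma h_C2: "z \<in> sub G x2 \<Longrightarrow> h z \<in> sub G x1"
  unfolding h_def using psi_C2 by simp

lemma fh: "z \<in> verts G \<Longrightarrow> f (h z) = f z"
  unfolding h_def using psi_C2 by simp

lemma hV: "z \<in> verts G \<Longrightarrow> h z \<in> W"
  using h_C2 C1W unfolding h_def W_def by (cases "z \<in> sub G x2") auto

lemma h_x2: "h x2 = x1"
  unfolding h_def using x2C2 basics(8) psi_C1 x1C1 by metis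

lemma boundary:
  assumes "(u, w) \<in> edges G" "u \<notin> sub G x2" "w \<in> sub G x2"
  shows "u = v \<and> w = x2"
proof -
  have uV: "u \<in> verts G" and wV: "w \<in> verts G" using G.E_V assms(1) by auto
  have "u \<noteq> w" using assms by blast
  from G.edge_cases[OF assms(1) this] show ?thesis
  proof
    assume H1: "w \<noteq> root G \<and> par G w = u"
    then have "w = x2" using G.sub_step[OF wV] assms by blast
    then show ?thesis using H1 basics by simp
  next
    assume H1: "u \<noteq> root G \<and> par G u = w"
    then have "u \<in> sub G x2" using G.sub_step[OF uV] assms by blast
    then show ?thesis using assms by simp
  qed
qed

lemma anc_closed: "b \<in> W \<Longrightarrow> a \<in> set (rp G b) \<Longrightarrow> a \<in> W"
proof -
  assume b: "b \<in> W" and a: "a \<in> set (rp G b)"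
  have bV: "b \<in> verts G" using b WV by blast
  have aV: "a \<in> verts G" using G.rp_anc_V bV a by blast
  show "a \<in> W"
  proof (rule ccontr)
    assume "a \<notin> W"
    then have "x2 \<in> set (rp G a)" using aV unfolding W_def sub_def by blast
    then have "x2 \<in> set (rp G b)" using G.rp_trans[OF bV a] by blast
    then show False using b bV unfolding W_def sub_def by blast
  qed
qed

lemma path_in_W:
  assumes P: "is_path (edges G) p x y" and x: "x \<in> W" and y: "y \<in> W"
  shows "set p \<subseteq> W"
proof (rule ccontr)
  assume "\<not> set p \<subseteq> W"
  have pV: "set p \<subseteq> verts G" using G.path_in_V P x WV by blast
  then obtain z where z: "z \<in> set p" "z \<notin> W" using \<open>\<not> set p \<subseteq> W\<close> by blast
  then obtain k where k: "k < length p" "p ! k = z" by (auto simp: in_set_conv_nth)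
  have zC: "z \<in> sub G x2" using z pV unfolding W_def by blast
  let ?I = "{k. k < length p \<and> p ! k \<in> sub G x2}"
  have finI: "finite ?I" by (rule finite_subset[of _ "{..<length p}"]) auto
  have neI: "?I \<noteq> {}" using k zC by blast
  define m where "m = Min ?I"
  define M where "M = Max ?I"
  have m: "m \<in> ?I" "\<And>j. j \<in> ?I \<Longrightarrow> m \<le> j" using Min_in[OF finI neI] Min_le[OF finI] unfolding m_def by auto
  have M: "M \<in> ?I" "\<And>j. j \<in> ?I \<Longrightarrow> j \<le> M" using Max_in[OF finI neI] Max_ge[OF finI] unfolding M_def by auto
  have ne: "p \<noteq> []" and hd: "hd p = x" and lst: "last p = y" and dist: "distinct p"
    and adj: "\<And>i. Suc i < length p \<Longrightarrow> (p ! i, p ! Suc i) \<in> edges G"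
    using P unfolding is_path_def by auto
  have p0: "p ! 0 = x" using hd ne by (simp add: hd_conv_nth)
  have pl: "p ! (length p - 1) = y" using lst ne by (simp add: last_conv_nth)
  have xC: "x \<notin> sub G x2" and yC: "y \<notin> sub G x2" using x y unfolding W_def by auto
  have m0: "m \<noteq> 0"
  proof
    assume "m = 0"
    then show False using m(1) p0 xC by simp
  qed
  have Ml: "Suc M < length p"
  proof -
    have "M \<noteq> length p - 1" using M(1) pl yC by auto
    moreover have "M < length p" using M(1) by simp
    ultimately show ?thesis by linarith
  qed
  have e1: "(p ! (m - 1), p ! m) \<in> edges G" using adj[of "m - 1"] m0 m(1) by simp
  have "m - 1 \<notin> ?I" using m(2)[of "m - 1"] m0 by auto
  then have n1: "p ! (m - 1) \<notin> sub G x2" using m(1) by auto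
  from boundary[OF e1 n1] m(1) have b1: "p ! (m - 1) = v" "p ! m = x2" by auto
  have e2: "(p ! Suc M, p ! M) \<in> edges G" using G.E_sym[OF adj[OF Ml]] .
  have "Suc M \<notin> ?I" using M(2)[of "Suc M"] by auto
  then have n2: "p ! Suc M \<notin> sub G x2" using Ml by auto
  from boundary[OF e2 n2] M(1) have b2: "p ! Suc M = v" "p ! M = x2" by auto
  have "m = M" using b1(2) b2(2) nth_eq_iff_index_eq[OF dist] m(1) M(1) by auto
  moreover have "m - 1 = Suc M"
  proof -
    have "m < length p" using m(1) by simp
    then have "m - 1 < length p" by (rule less_imp_diff_less)
    then show ?thesis using b1(1) b2(1) nth_eq_iff_index_eq[OF dist _ Ml] by metis
  qed
  ultimately show False using m0 by simp
qed

lemma T_tree: "rooted_tree T"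
  unfolding rooted_tree_def is_tree_def T_simps
proof (intro conjI ballI impI rootW)
  show "finite W" using finite_subset[OF WV G.finV] .
  show "is_graph W (edges G \<inter> W \<times> W)"
    unfolding is_graph_def
  proof (intro conjI allI impI ballI)
    show "edges G \<inter> W \<times> W \<subseteq> W \<times> W" by (rule Int_lower2)
    fix x assume "x \<in> W"
    then show "(x, x) \<in> edges G \<inter> W \<times> W" using G.E_refl WV by blast
  next
    fix x y assume "(x, y) \<in> edges G \<inter> W \<times> W"
    then show "(y, x) \<in> edges G \<inter> W \<times> W" using G.E_sym by blast
  qed
  fix x y assume xy: "x \<in> W" "y \<in> W" "x \<noteq> y"
  have "x \<in> verts G" "y \<in> verts G" using xy WV by auto
  then have ex: "\<exists>!p. is_path (edges G) p x y" using G.uniq xy(3) by simp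
  obtain p where p: "is_path (edges G) p x y" and pu: "\<forall>q. is_path (edges G) q x y \<longrightarrow> q = p"
    using ex by (elim ex1E) blast
  show "\<exists>!p. is_path (edges G \<inter> W \<times> W) p x y"
  proof (rule ex1I[of _ p])
    show "is_path (edges G \<inter> W \<times> W) p x y" using path_restrict[OF p path_in_W[OF p xy(1,2)]] .
    fix q assume q: "is_path (edges G \<inter> W \<times> W) q x y"
    have "is_path (edges G) q x y" by (rule G.path_mono[OF q Int_lower1])
    then show "q = p" using pu by blast
  qed
qed

lemma tree_le_T: "b \<in> W \<Longrightarrow> a \<in> set (rp G b) \<Longrightarrow> tree_le T a b"
proof -
  assume b: "b \<in> W" and a: "a \<in> set (rp G b)"
  have bV: "b \<in> verts G" using b WV by blast
  have P: "is_path (edges G) (rp G b) (root G) b" using G.rp_path[OF bV] .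
  have "set (rp G b) \<subseteq> W" using anc_closed b by blast
  then have "is_path (edges T) (rp G b) (root T) b" using path_restrict[OF P] T_simps by simp
  then show ?thesis unfolding tree_le_def using a by blast
qed

lemma tree_le_TG: assumes "tree_le T a b" shows "tree_le G a b"
proof -
  obtain p where p: "is_path (edges T) p (root T) b" "a \<in> set p" using assms unfolding tree_le_def by blast
  have "edges T \<subseteq> edges G" using T_simps by simp
  then have "is_path (edges G) p (root G) b" using G.path_mono[OF p(1), of "edges G"] T_simps by simp
  then show ?thesis unfolding tree_le_def using p(2) by blast
qed

lemma par_reflect:
  assumes c: "c \<in> sub G x1" and d: "d \<in> sub G x1" and fd: "f d \<noteq> root H" "par H (f d) = f c"
  shows "d \<noteq> root G \<and> par G d = c"
proof -
  have cV: "c \<in> verts G" and dV: "d \<in> verts G" using c d G.sub_V by auto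
  have dx: "d \<noteq> x1"
  proof
    assume "d = x1"
    have "f c \<in> sub H (f x1)" using f_sub_subset[OF basics(1)] c by blast
    then have "f x1 \<in> set (rp H (f c))" unfolding sub_def by simp
    moreover have "f c \<in> set (rp H (f x1))" using H.par_in_rp[OF fV[OF dV] fd(1)] fd(2) \<open>d = x1\<close> by simp
    ultimately have "f c = f x1" using H.rp_antisym[OF fV[OF cV] fV[OF basics(1)]] by simp
    then have "par H (f d) = f d" using fd(2) \<open>d = x1\<close> by simp
    then show False using H.rp_par(5)[OF fV[OF dV] fd(1)] by simp
  qed
  have dnr: "d \<noteq> root G" using G.root_sub d basics(4) by blast
  have "par G d \<in> sub G x1" using G.sub_step[OF dV dnr] d dx by blast
  moreover have "f (par G d) = f c" using f_par(2)[OF dV dnr] fd(2) by simp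
  ultimately have "par G d = c" using inj1 c unfolding inj_on_def by blast
  then show ?thesis using dnr by simp
qed

lemma edge_reflect:
  assumes c: "c \<in> sub G x1" and d: "d \<in> sub G x1" and e: "(f c, f d) \<in> edges H"
  shows "(c, d) \<in> edges G"
proof (cases "f c = f d")
  case True
  then have "c = d" using inj1 c d unfolding inj_on_def by blast
  then show ?thesis using G.E_refl G.sub_V c by blast
next
  case False
  from H.edge_cases[OF e False] show ?thesis
  proof
    assume "f d \<noteq> root H \<and> par H (f d) = f c"
    then have "d \<noteq> root G \<and> par G d = c" using par_reflect[OF c d] by blast
    then show ?thesis using G.rp_par(3)[of d] d G.sub_V by blast
  next
    assume "f c \<noteq> root H \<and> par H (f c) = f d"
    then have "c \<noteq> root G \<and> par G c = d" using par_reflect[OF d c] by blast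
    then show ?thesis using G.rp_par(4)[of c] c G.sub_V by blast
  qed
qed

lemma anc_reflect:
  "c \<in> sub G x1 \<Longrightarrow> d \<in> sub G x1 \<Longrightarrow> f c \<in> set (rp H (f d)) \<Longrightarrow> c \<in> set (rp G d)"
proof (induction d rule: measure_induct_rule[where f="\<lambda>d. length (rp G d)"])
  case (less d)
  have cV: "c \<in> verts G" and dV: "d \<in> verts G" using less.prems G.sub_V by auto
  show ?case
  proof (cases "f c = f d")
    case True
    then have "c = d" using inj1 less.prems unfolding inj_on_def by blast
    then show ?thesis using G.rp_basic(6)[OF dV] by simp
  next
    case False
    have dx: "d \<noteq> x1"
    proof
      assume "d = x1"
      have "f c \<in> sub H (f x1)" using f_sub_subset[OF basics(1)] less.prems(1) by blast
      then have "f x1 \<in> set (rp H (f c))" unfolding sub_def by simp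
      then have "f c = f x1" using H.rp_antisym[OF fV[OF cV] fV[OF basics(1)]] less.prems(3) \<open>d = x1\<close> by simp
      then show False using False \<open>d = x1\<close> by simp
    qed
    have dnr: "d \<noteq> root G" using G.root_sub less.prems(2) basics(4) by blast
    have pd: "par G d \<in> sub G x1" using G.sub_step[OF dV dnr] less.prems(2) dx by blast
    have fdr: "f d \<noteq> root H" using f_par(1)[OF dV dnr] .
    have "f c \<in> set (rp H (par H (f d)))"
      using H.rp_par(2)[OF fV[OF dV] fdr] less.prems(3) False by simp
    then have "f c \<in> set (rp H (f (par G d)))" using f_par(2)[OF dV dnr] by simp
    then have "c \<in> set (rp G (par G d))"
      using less.IH[OF G.rp_par_less[OF dV dnr] less.prems(1) pd] by blast
    then show ?thesis using G.rp_trans[OF dV G.par_in_rp[OF dV dnr]] by blast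
  qed
qed

lemma h_edge: assumes "(a, b) \<in> edges G" shows "(h a, h b) \<in> edges G \<inter> (W \<times> W)"
proof -
  have aV: "a \<in> verts G" and bV: "b \<in> verts G" using G.E_V assms by auto
  have vx1: "(v, x1) \<in> edges G" "(x1, v) \<in> edges G"
    using G.rp_par(3,4)[OF basics(1,4)] basics(7) by auto
  have x1W: "x1 \<in> W" using C1W x1C1 by blast
  show ?thesis
  proof (cases "a \<in> sub G x2")
    case aC: True
    show ?thesis
    proof (cases "b \<in> sub G x2")
      case bC: True
      have pa: "h a \<in> sub G x1" "f (h a) = f a" using h_C2[OF aC] fh[OF aV] by auto
      have pb: "h b \<in> sub G x1" "f (h b) = f b" using h_C2[OF bC] fh[OF bV] by auto
      have "(f (h a), f (h b)) \<in> edges H" using fE[OF assms] pa pb by simp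
      then have "(h a, h b) \<in> edges G" using edge_reflect pa(1) pb(1) by blast
      then show ?thesis using pa(1) pb(1) C1W by blast
    next
      case bC: False
      have "b = v \<and> a = x2" using boundary[OF G.E_sym[OF assms] bC aC] .
      then show ?thesis using h_x2 h_W[OF vW] vx1 vW x1W by auto
    qed
  next
    case aC: False
    show ?thesis
    proof (cases "b \<in> sub G x2")
      case bC: True
      have "a = v \<and> b = x2" using boundary[OF assms aC bC] .
      then show ?thesis using h_x2 h_W[OF vW] vx1 vW x1W by auto
    next
      case bC: False
      have "a \<in> W" "b \<in> W" using aC bC aV bV unfolding W_def by auto
      then show ?thesis using h_W assms by simp
    qed
  qed
qed

lemma h_epi: "epimorphism h G T"
  unfolding epimorphism_def
proof (intro conjI ballI impI)
  show "rooted_tree G" using G.rt .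
  show "rooted_tree T" using T_tree .
  show "h ` verts G = verts T"
  proof
    show "h ` verts G \<subseteq> verts T" using hV T_simps by auto
    show "verts T \<subseteq> h ` verts G"
    proof
      fix z assume "z \<in> verts T"
      then have "z \<in> W" using T_simps by simp
      then have "z = h z" "z \<in> verts G" using h_W[of z] WV by auto
      then show "z \<in> h ` verts G" by (rule image_eqI)
    qed
  qed
  show "(\<lambda>(a, b). (h a, h b)) ` edges G = edges T"
  proof
    show "(\<lambda>(a, b). (h a, h b)) ` edges G \<subseteq> edges T"
    proof
      fix e assume "e \<in> (\<lambda>(a, b). (h a, h b)) ` edges G"
      then obtain a b where ab: "(a, b) \<in> edges G" "e = (h a, h b)" by auto
      then show "e \<in> edges T" using h_edge[OF ab(1)] T_simps by simp
    qed
    show "edges T \<subseteq> (\<lambda>(a, b). (h a, h b)) ` edges G"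
    proof
      fix e assume "e \<in> edges T"
      then obtain a b where e: "e = (a, b)" "(a, b) \<in> edges G" "a \<in> W" "b \<in> W" using T_simps by auto
      then have "e = (\<lambda>(a, b). (h a, h b)) (a, b)" using h_W by simp
      then show "e \<in> (\<lambda>(a, b). (h a, h b)) ` edges G" using e(2) by blast
    qed
  qed
  show "h (root G) = root T" using h_W[OF rootW] T_simps by simp
  fix a b assume aV: "a \<in> verts G" and bV: "b \<in> verts G" and le: "tree_le G a b"
  have ab: "a \<in> set (rp G b)" using G.tree_le_iff[OF bV] le by simp
  show "tree_le T (h a) (h b)"
  proof (cases "b \<in> sub G x2")
    case bC: False
    then have bW: "b \<in> W" using bV unfolding W_def by simp
    then have "a \<in> W" using anc_closed ab by blast
    then show ?thesis using tree_le_T[OF bW] ab h_W bW by simp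
  next
    case bC: True
    have hb: "h b \<in> sub G x1" using h_C2[OF bC] .
    have hbW: "h b \<in> W" using hb C1W by blast
    have hbV: "h b \<in> verts G" using hb G.sub_V by blast
    show ?thesis
    proof (cases "a \<in> sub G x2")
      case aC: True
      have ha: "h a \<in> sub G x1" using h_C2[OF aC] .
      have "f a \<in> set (rp H (f b))" using fle[OF bV ab] .
      then have "f (h a) \<in> set (rp H (f (h b)))" using fh aV bV by simp
      then have "h a \<in> set (rp G (h b))" using anc_reflect[OF ha hb] by blast
      then show ?thesis using tree_le_T[OF hbW] by blast
    next
      case aC: False
      have x2b: "x2 \<in> set (rp G b)" using bC unfolding sub_def by simp
      from G.rp_linear[OF bV ab x2b] have "a \<in> set (rp G x2)"
      proof
        assume "x2 \<in> set (rp G a)"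
        then have "a \<in> sub G x2" using aV unfolding sub_def by simp
        then show ?thesis using aC by simp
      qed simp
      moreover have "a \<noteq> x2" using aC x2C2 by blast
      ultimately have "a \<in> set (rp G v)" using rp_x by simp
      moreover have "v \<in> set (rp G x1)" using rp_x G.rp_basic(6)[OF vV] by simp
      moreover have "x1 \<in> set (rp G (h b))" using hb unfolding sub_def by simp
      ultimately have "a \<in> set (rp G (h b))"
        using G.rp_trans[OF hbV] G.rp_trans[OF basics(1)] by blast
      moreover have "h a = a" using aC aV h_W unfolding W_def by simp
      ultimately show ?thesis using tree_le_T[OF hbW] by simp
    qed
  qed
qed

end

context fold begin

lemma fT_img: "f ` W = verts H"
proof
  show "f ` W \<subseteq> verts H" using fV WV by blast
  show "verts H \<subseteq> f ` W"
  proof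
    fix y assume "y \<in> verts H"
    then obtain z where z: "z \<in> verts G" "y = f z" using fimg by blast
    then have "y = f (h z)" using fh by simp
    then show "y \<in> f ` W" using hV[OF z(1)] by blast
  qed
qed

lemma fT_edges: "(\<lambda>(a,b). (f a, f b)) ` (edges G \<inter> W \<times> W) = edges H"
proof
  show "(\<lambda>(a,b). (f a, f b)) ` (edges G \<inter> W \<times> W) \<subseteq> edges H"
  proof
    fix e assume "e \<in> (\<lambda>(a,b). (f a, f b)) ` (edges G \<inter> W \<times> W)"
    then obtain a b where ab: "(a, b) \<in> edges G" "e = (f a, f b)" by auto
    then show "e \<in> edges H" using fE by simp
  qed
  show "edges H \<subseteq> (\<lambda>(a,b). (f a, f b)) ` (edges G \<inter> W \<times> W)"
  proof
    fix e assume "e \<in> edges H"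
    then have "e \<in> (\<lambda>(a,b). (f a, f b)) ` edges G" using epi unfolding epimorphism_def by simp
    then obtain a b where ab: "(a, b) \<in> edges G" "e = (f a, f b)" by auto
    have hab: "(h a, h b) \<in> edges G \<inter> W \<times> W" using h_edge[OF ab(1)] .
    have "e = (\<lambda>(a,b). (f a, f b)) (h a, h b)" using fh G.E_V ab by auto
    then show "e \<in> (\<lambda>(a,b). (f a, f b)) ` (edges G \<inter> W \<times> W)" using hab by (rule image_eqI)
  qed
qed

lemma fT_epi: "epimorphism f T H"
  unfolding epimorphism_def
proof (intro conjI ballI impI)
  show "rooted_tree T" using T_tree .
  show "rooted_tree H" using H.rt .
  show "f ` verts T = verts H" using fT_img T_simps by simp
  show "(\<lambda>(a, b). (f a, f b)) ` edges T = edges H" using fT_edges T_simps by simp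
  show "f (root T) = root H" using froot T_simps by simp
  fix a b assume a: "a \<in> verts T" and b: "b \<in> verts T" and le: "tree_le T a b"
  have "tree_le G a b" using tree_le_TG[OF le] .
  moreover have "a \<in> verts G" "b \<in> verts G" using a b T_simps WV by auto
  ultimately show "tree_le H (f a) (f b)" using epi unfolding epimorphism_def by blast
qed

lemma fT_light: "light f T"
  unfolding light_def T_simps
proof (intro ballI impI)
  fix x y assume "x \<in> W" "y \<in> W" "x \<noteq> y \<and> f x = f y"
  then have "(x, y) \<notin> edges G" using flight WV by blast
  then show "(x, y) \<notin> edges G \<inter> W \<times> W" by blast
qed

lemma fT_confl: "confluent f T H"
  unfolding confluent_def
proof (intro allI impI)
  fix Q K assume Q: "Q \<subseteq> verts H \<and> connected_set (edges H) Q"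
    and K: "component_of (edges T) (verts T \<inter> f -` Q) K"
  have KS: "K \<subseteq> W \<inter> f -` Q" and Kne: "K \<noteq> {}" and Kc: "connected_set (edges G \<inter> W \<times> W) K"
    and Kmax: "\<And>L. K \<subseteq> L \<Longrightarrow> L \<subseteq> W \<inter> f -` Q \<Longrightarrow> connected_set (edges G \<inter> W \<times> W) L \<Longrightarrow> L = K"
    using K unfolding component_of_def T_simps by blast+
  have KG: "connected_set (edges G) K" using connected_mono_edges[OF Kc] by blast
  have KS': "K \<subseteq> verts G \<inter> f -` Q" using KS WV by blast
  have fin: "finite (verts G \<inter> f -` Q)" using G.finV by simp
  obtain K' where K': "K \<subseteq> K'" "component_of (edges G) (verts G \<inter> f -` Q) K'"
    using exists_component[OF fin KS' Kne KG] by blast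
  have fK': "f ` K' = Q" using confl Q K'(2) unfolding confluent_def by blast
  have K'S: "K' \<subseteq> verts G \<inter> f -` Q" and K'c: "connected_set (edges G) K'"
    using K'(2) unfolding component_of_def by auto
  have hc: "connected_set (edges G \<inter> W \<times> W) (h ` K')"
    using connected_image[OF K'c, of h] h_edge by blast
  have hS: "h ` K' \<subseteq> W \<inter> f -` Q"
  proof
    fix y assume "y \<in> h ` K'"
    then obtain z where z: "z \<in> K'" "y = h z" by blast
    then have zV: "z \<in> verts G" "f z \<in> Q" using K'S by auto
    then show "y \<in> W \<inter> f -` Q" using z hV fh by simp
  qed
  have Kh: "K \<subseteq> h ` K'"
  proof
    fix k assume k: "k \<in> K"
    then have "k = h k" using KS h_W by auto
    then show "k \<in> h ` K'" using k K'(1) by blast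
  qed
  have "h ` K' = K" using Kmax[OF Kh hS hc] .
  then have "f ` K = f ` h ` K'" by simp
  also have "\<dots> = f ` K'"
  proof -
    have "\<And>z. z \<in> K' \<Longrightarrow> f (h z) = f z" using fh K'S by blast
    then show ?thesis by (simp add: image_image cong: image_cong)
  qed
  finally show "f ` K = Q" using fK' by simp
qed

lemma card_W: "card W < card (verts G)"
proof -
  have "W \<subset> verts G" using WV x2C2 basics(2) unfolding W_def by blast
  then show ?thesis using psubset_card_mono G.finV by blast
qed

lemma comps:
  "component_of (edges G) (verts G - {v}) (sub G x1)"
  "component_of (edges G) (verts G - {v}) (sub G x2)"
  "sub G x1 \<noteq> sub G x2"
  using G.sub_component[OF basics(1,4)] G.sub_component[OF basics(2,5)] basics(6,7) x1C1 disj
  by auto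

lemma h_elem: "elementary_lc h G T"
  unfolding elementary_lc_def
proof (intro conjI h_epi)
  have hC1: "h ` sub G x1 = sub G x1"
  proof -
    have "\<And>z. z \<in> sub G x1 \<Longrightarrow> h z = z" using h_W C1W by blast
    then show ?thesis by (simp cong: image_cong)
  qed
  have hC2: "h ` sub G x2 = sub G x1"
  proof
    show "h ` sub G x2 \<subseteq> sub G x1" using h_C2 by blast
    show "sub G x1 \<subseteq> h ` sub G x2"
    proof
      fix c assume c: "c \<in> sub G x1"
      then have "f c \<in> f ` sub G x2" using fC by blast
      then obtain z where z: "z \<in> sub G x2" "f c = f z" by blast
      then have "h z = psi (f c)" unfolding h_def by simp
      then have "h z = c" using psi_C1[OF c] by simp
      then show "c \<in> h ` sub G x2" using z(1) by blast
    qed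
  qed
  have vnC1: "v \<notin> sub G x1" using comps(1) unfolding component_of_def by blast
  have c1T: "component_of (edges T) (verts T - {h v}) (h ` sub G x1)"
    unfolding hC1 h_W[OF vW] T_simps
  proof (rule component_crit)
    show "sub G x1 \<noteq> {}" using x1C1 by blast
    show "sub G x1 \<subseteq> W - {v}" using C1W vnC1 by blast
    have "connected_set (edges G) (sub G x1)" using comps(1) unfolding component_of_def by blast
    then show "connected_set (edges G \<inter> W \<times> W) (sub G x1)"
      by (rule connected_mono_edges) (use C1W in blast)
    fix a b assume a: "a \<in> sub G x1" and b: "b \<in> W - {v} - sub G x1"
    have "(a, b) \<notin> edges G"
      using G.sub_no_edge[OF basics(1,4) a] b WV basics(7) by blast
    then show "(a, b) \<notin> edges G \<inter> W \<times> W" by blast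
  qed
  have i1: "inj_on h (sub G x1)"
    using h_W C1W by (intro inj_onI) (metis subsetD)
  have i2: "inj_on h (sub G x2)"
  proof (rule inj_onI)
    fix a b assume ab: "a \<in> sub G x2" "b \<in> sub G x2" "h a = h b"
    then have "f (h a) = f (h b)" by simp
    then have "f a = f b" using fh ab G.sub_V by (metis subsetD)
    then show "a = b" using inj2 ab unfolding inj_on_def by blast
  qed
  have i3: "inj_on h (verts G - (sub G x1 \<union> sub G x2))"
  proof (rule inj_onI)
    fix a b assume ab: "a \<in> verts G - (sub G x1 \<union> sub G x2)" "b \<in> verts G - (sub G x1 \<union> sub G x2)" "h a = h b"
    then have "a \<in> W" "b \<in> W" unfolding W_def by auto
    then show "a = b" using ab(3) h_W by simp
  qed
  show "\<exists>v\<in>verts G. \<exists>C1 C2. component_of (edges G) (verts G - {v}) C1 \<and>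
     component_of (edges G) (verts G - {v}) C2 \<and> C1 \<noteq> C2 \<and>
     inj_on h C1 \<and> inj_on h C2 \<and> h ` C1 = h ` C2 \<and>
     component_of (edges T) (verts T - {h v}) (h ` C1) \<and>
     inj_on h (verts G - (C1 \<union> C2))"
    apply (rule bexI[of _ v], rule exI[of _ "sub G x1"], rule exI[of _ "sub G x2"])
    using comps i1 i2 hC1 hC2 c1T i3 vV by auto
qed

lemma f_elem:
  assumes injW: "inj_on f W"
  shows "elementary_lc f G H"
  unfolding elementary_lc_def
proof (intro conjI epi)
  have fC1: "f ` sub G x1 = sub H (f x1)" using f_sub_eq[OF basics(1)] .
  have fv: "f v = par H (f x1)" using f_par(2)[OF basics(1,4)] basics(7) by simp
  have c: "component_of (edges H) (verts H - {f v}) (f ` sub G x1)"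
    using H.sub_component[OF fV[OF basics(1)] f_par(1)[OF basics(1,4)]] fC1 fv by simp
  have i3: "inj_on f (verts G - (sub G x1 \<union> sub G x2))"
    using injW by (rule inj_on_subset) (auto simp: W_def)
  show "\<exists>v\<in>verts G. \<exists>C1 C2. component_of (edges G) (verts G - {v}) C1 \<and>
     component_of (edges G) (verts G - {v}) C2 \<and> C1 \<noteq> C2 \<and>
     inj_on f C1 \<and> inj_on f C2 \<and> f ` C1 = f ` C2 \<and>
     component_of (edges H) (verts H - {f v}) (f ` C1) \<and>
     inj_on f (verts G - (C1 \<union> C2))"
    apply (rule bexI[of _ v], rule exI[of _ "sub G x1"], rule exI[of _ "sub G x2"])
    using comps inj1 inj2 fC c i3 vV by auto
qed

end

lemma foldl_comp: fixes a :: "'a \<Rightarrow> 'a" shows "foldl (\<lambda>acc g. g \<circ> acc) a fs = foldl (\<lambda>acc g. g \<circ> acc) id fs \<circ> a"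
proof (induction fs arbitrary: a)
  case Nil then show ?case by simp
next
  case (Cons g fs)
  have 1: "foldl (\<lambda>acc g. g \<circ> acc) a (g # fs) = foldl (\<lambda>acc g. g \<circ> acc) id fs \<circ> (g \<circ> a)"
    by (simp only: foldl_Cons) (rule Cons.IH)
  have 2: "foldl (\<lambda>acc g. g \<circ> acc) id (g # fs) = foldl (\<lambda>acc g. g \<circ> acc) id fs \<circ> g"
    by (simp only: foldl_Cons comp_id) (rule Cons.IH)
  show ?case unfolding 1 2 by (simp add: comp_assoc)
qed

lemma compose_list_Cons: "compose_list (g # fs) x = compose_list fs (g x)"
  unfolding compose_list_def using foldl_comp[of "g \<circ> id" fs] by simp

lemma main:
  fixes f :: "'a \<Rightarrow> 'b" and H :: "'b rtree"
  shows "epimorphism f G H \<Longrightarrow> light f G \<Longrightarrow> confluent f G H \<Longrightarrow>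
    inj_on f (verts G) \<or>
    (\<exists>(Ts :: 'a rtree list) (fs :: ('a \<Rightarrow> 'a) list) (g :: 'a \<Rightarrow> 'b).
       length Ts = Suc (length fs) \<and> Ts ! 0 = G \<and>
       (\<forall>i < length fs. elementary_lc (fs ! i) (Ts ! i) (Ts ! Suc i)) \<and>
       elementary_lc g (last Ts) H \<and>
       (\<forall>x \<in> verts G. f x = g (compose_list fs x)))"
proof (induction "card (verts G)" arbitrary: G rule: less_induct)
  case less
  have rG: "rooted_tree G" and rH: "rooted_tree H" using less.prems(1) unfolding epimorphism_def by auto
  interpret L: lce G H f
    by unfold_locales (auto simp: rG rH less.prems)
  show ?case
  proof (cases "inj_on f (verts G)")
    case True then show ?thesis by simp
  next
    case False
    then obtain x1 x2 where x: "L.sc x1 x2" "inj_on f (sub G x1)" "inj_on f (sub G x2)"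
      using L.exists_fold by blast
    interpret F: fold G H f x1 x2
      by unfold_locales (auto simp: rG rH less.prems x)
    have cT: "card (verts F.T) < card (verts G)" using F.card_W F.T_simps by simp
    from less.hyps[OF cT F.fT_epi F.fT_light F.fT_confl]
    show ?thesis
    proof
      assume "inj_on f (verts F.T)"
      then have "elementary_lc f G H" using F.f_elem F.T_simps by simp
      then have "length [G] = Suc (length ([] :: ('a \<Rightarrow> 'a) list)) \<and> [G] ! 0 = G \<and>
       (\<forall>i < length ([] :: ('a \<Rightarrow> 'a) list). elementary_lc (([] :: ('a \<Rightarrow> 'a) list) ! i) ([G] ! i) ([G] ! Suc i)) \<and>
       elementary_lc f (last [G]) H \<and>
       (\<forall>x \<in> verts G. f x = f (compose_list [] x))"
        by (simp add: compose_list_def)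
      then show ?thesis by blast
    next
      assume "\<exists>(Ts :: 'a rtree list) (fs :: ('a \<Rightarrow> 'a) list) (g :: 'a \<Rightarrow> 'b).
       length Ts = Suc (length fs) \<and> Ts ! 0 = F.T \<and>
       (\<forall>i < length fs. elementary_lc (fs ! i) (Ts ! i) (Ts ! Suc i)) \<and>
       elementary_lc g (last Ts) H \<and>
       (\<forall>x \<in> verts F.T. f x = g (compose_list fs x))"
      then obtain Ts fs g where IH: "length Ts = Suc (length fs)" "Ts ! 0 = F.T"
        "\<forall>i < length fs. elementary_lc (fs ! i) (Ts ! i) (Ts ! Suc i)"
        "elementary_lc g (last Ts) H" "\<forall>x \<in> verts F.T. f x = g (compose_list fs x)"
        by blast
      have Tsne: "Ts \<noteq> []" using IH(1) by auto
      have a1: "length (G # Ts) = Suc (length (F.h # fs))" using IH(1) by simp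
      have a2: "(G # Ts) ! 0 = G" by simp
      have a3: "\<forall>i < length (F.h # fs). elementary_lc ((F.h # fs) ! i) ((G # Ts) ! i) ((G # Ts) ! Suc i)"
      proof (intro allI impI)
        fix i assume i: "i < length (F.h # fs)"
        show "elementary_lc ((F.h # fs) ! i) ((G # Ts) ! i) ((G # Ts) ! Suc i)"
        proof (cases i)
          case 0 then show ?thesis using F.h_elem IH(2) by simp
        next
          case (Suc j) then show ?thesis using IH(3) i by simp
        qed
      qed
      have a4: "elementary_lc g (last (G # Ts)) H" using IH(4) Tsne by simp
      have a5: "\<forall>x \<in> verts G. f x = g (compose_list (F.h # fs) x)"
      proof
        fix x assume xV: "x \<in> verts G"
        have "F.h x \<in> verts F.T" using F.hV[OF xV] F.T_simps by simp
        then have "f (F.h x) = g (compose_list fs (F.h x))" using IH(5) by blast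
        then show "f x = g (compose_list (F.h # fs) x)" using F.fh[OF xV] compose_list_Cons by metis
      qed
      show ?thesis using a1 a2 a3 a4 a5 by blast
    qed
  qed
qed

theorem corollary8p15:
  fixes f :: "'a \<Rightarrow> 'b" and G :: "'a rtree" and H :: "'b rtree"
  assumes "epimorphism f G H" and "light f G" and "confluent f G H"
  shows "inj_on f (verts G) \<or>
    (\<exists>(Ts :: 'a rtree list) (fs :: ('a \<Rightarrow> 'a) list) (g :: 'a \<Rightarrow> 'b).
       length Ts = Suc (length fs) \<and> Ts ! 0 = G \<and>
       (\<forall>i < length fs. elementary_lc (fs ! i) (Ts ! i) (Ts ! Suc i)) \<and>
       elementary_lc g (last Ts) H \<and>
       (\<forall>x \<in> verts G. f x = g (compose_list fs x)))"
  using main[OF assms] .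

end
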